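(* Let $M$ be a connected matroid and let $N$ be a minor of $M$. If $N$ has $l$ elements that are either a loop or a coloop, then $M$ has a minor $N'$ such that $N$ is a minor of $N'$, $N'$ has no loops and no coloops, and $|E(N')|\leq|E(N)|+l$.
   Context: Minors are taken with labelled ground sets: $N$ is a minor of $M$ if $N=M/C\setminus D$ for some disjoint $C,D\subseteq E(M)$. *)

theory Defs
  imports Main
begin

text \<open>A (finite) matroid is represented by its ground set together with its
independence predicate. Everything outside the ground set is dependent.\<close>

type_synonym 'a matroid = "'a set \<times> ('a set \<Rightarrow> bool)"

definition gnd :: "'a matroid \<Rightarrow> 'a set" where
  "gnd M = fst M"

definition indep :: "'a matroid \<Rightarrow> 'a set \<Rightarrow> bool" where
  "indep M = snd M"

definition matroid :: "'a matroid \<Rightarrow> bool" where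
  "matroid M \<longleftrightarrow>
     finite (gnd M) \<and>
     indep M {} \<and>
     (\<forall>I. indep M I \<longrightarrow> I \<subseteq> gnd M) \<and>
     (\<forall>I J. indep M J \<and> I \<subseteq> J \<longrightarrow> indep M I) \<and>
     (\<forall>I J. indep M I \<and> indep M J \<and> card I < card J \<longrightarrow>
        (\<exists>e \<in> J - I. indep M (insert e I)))"

definition rank :: "'a matroid \<Rightarrow> 'a set \<Rightarrow> nat" where
  "rank M X = Max {card I | I. I \<subseteq> X \<and> indep M I}"

definition basis :: "'a matroid \<Rightarrow> 'a set \<Rightarrow> bool" where
  "basis M B \<longleftrightarrow> indep M B \<and> (\<forall>B'. indep M B' \<and> B \<subseteq> B' \<longrightarrow> B' = B)"

definition circuit :: "'a matroid \<Rightarrow> 'a set \<Rightarrow> bool" where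
  "circuit M C \<longleftrightarrow> C \<subseteq> gnd M \<and> \<not> indep M C \<and> (\<forall>D. D \<subset> C \<longrightarrow> indep M D)"

definition loop :: "'a matroid \<Rightarrow> 'a \<Rightarrow> bool" where
  "loop M e \<longleftrightarrow> e \<in> gnd M \<and> \<not> indep M {e}"

definition coloop :: "'a matroid \<Rightarrow> 'a \<Rightarrow> bool" where
  "coloop M e \<longleftrightarrow> e \<in> gnd M \<and> (\<forall>B. basis M B \<longrightarrow> e \<in> B)"

definition connected_matroid :: "'a matroid \<Rightarrow> bool" where
  "connected_matroid M \<longleftrightarrow>
     (\<forall>e \<in> gnd M. \<forall>f \<in> gnd M. e \<noteq> f \<longrightarrow> (\<exists>C. circuit M C \<and> e \<in> C \<and> f \<in> C))"

definition delete :: "'a matroid \<Rightarrow> 'a set \<Rightarrow> 'a matroid" where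
  "delete M D = (gnd M - D, \<lambda>I. indep M I \<and> I \<subseteq> gnd M - D)"

definition contract :: "'a matroid \<Rightarrow> 'a set \<Rightarrow> 'a matroid" where
  "contract M C = (gnd M - C,
     \<lambda>I. I \<subseteq> gnd M - C \<and> rank M (I \<union> C) = card I + rank M C)"

text \<open>Minors with labelled ground sets: N = M/C\D with C, D disjoint subsets of E(M).\<close>
definition minor :: "'a matroid \<Rightarrow> 'a matroid \<Rightarrow> bool" where
  "minor N M \<longleftrightarrow> (\<exists>C D. C \<subseteq> gnd M \<and> D \<subseteq> gnd M \<and> C \<inter> D = {} \<and>
                         N = delete (contract M C) D)"

end

theory Submission imports Defs begin

lemma m_fin: "matroid M \<Longrightarrow> finite (gnd M)" by (simp add: matroid_def)
lemma m_empty: "matroid M \<Longrightarrow> indep M {}" by (simp add: matroid_def)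
lemma m_sub: "matroid M \<Longrightarrow> indep M I \<Longrightarrow> I \<subseteq> gnd M" by (simp add: matroid_def)
lemma m_down: assumes "matroid M" "indep M J" "I \<subseteq> J" shows "indep M I"
proof -
  have "\<forall>I J. indep M J \<and> I \<subseteq> J \<longrightarrow> indep M I" using assms(1) unfolding matroid_def by (elim conjE)
  thus ?thesis using assms(2,3) by blast
qed
lemma m_aug: assumes "matroid M" "indep M I" "indep M J" "card I < card J" shows "\<exists>e\<in>J - I. indep M (insert e I)"
proof -
  have "\<forall>I J. indep M I \<and> indep M J \<and> card I < card J \<longrightarrow>
        (\<exists>e \<in> J - I. indep M (insert e I))" using assms(1) unfolding matroid_def by (elim conjE)
  thus ?thesis using assms(2-4) by blast
qed
lemma m_ifin: "matroid M \<Longrightarrow> indep M I \<Longrightarrow> finite I"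
  by (meson finite_subset m_fin m_sub)

lemma rset_fin: assumes "matroid M" shows "finite {card I | I. I \<subseteq> X \<and> indep M I}"
proof -
  have "{card I | I. I \<subseteq> X \<and> indep M I} \<subseteq> card ` Pow (gnd M)" using m_sub[OF assms] by blast
  moreover have "finite (card ` Pow (gnd M))" using m_fin[OF assms] by simp
  ultimately show ?thesis by (rule finite_subset)
qed

lemma rset_ne: assumes "matroid M" shows "{card I | I. I \<subseteq> X \<and> indep M I} \<noteq> {}"
  using m_empty[OF assms] by blast

lemma rank_ge: "matroid M \<Longrightarrow> indep M I \<Longrightarrow> I \<subseteq> X \<Longrightarrow> card I \<le> rank M X"
  unfolding rank_def by (rule Max_ge[OF rset_fin]) blast+

lemma rank_obtain: assumes "matroid M" obtains I where "I \<subseteq> X" "indep M I" "card I = rank M X"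
proof -
  have "rank M X \<in> {card I | I. I \<subseteq> X \<and> indep M I}"
    unfolding rank_def by (rule Max_in[OF rset_fin[OF assms] rset_ne[OF assms]])
  then obtain I where "I \<subseteq> X" "indep M I" "card I = rank M X" by auto
  thus ?thesis by (rule that)
qed

lemma rank_le_card: assumes "matroid M" "finite X" shows "rank M X \<le> card X"
proof -
  obtain I where "I \<subseteq> X" "indep M I" "card I = rank M X" using rank_obtain[OF assms(1)] by blast
  thus ?thesis using card_mono[OF assms(2), of I] by simp
qed

lemma rank_mono: assumes "matroid M" "X \<subseteq> Y" shows "rank M X \<le> rank M Y"
proof -
  obtain I where "I \<subseteq> X" "indep M I" "card I = rank M X" using rank_obtain[OF assms(1)] by blast
  thus ?thesis using rank_ge[OF assms(1), of I Y] assms(2) by auto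
qed

lemma rank_indep: assumes "matroid M" "indep M I" shows "rank M I = card I"
  using rank_ge[OF assms order_refl] rank_le_card[OF assms(1) m_ifin[OF assms]] by simp

lemma rank_card_indep: assumes "matroid M" "finite X" "rank M X = card X" shows "indep M X"
proof -
  obtain I where "I \<subseteq> X" "indep M I" "card I = rank M X" using rank_obtain[OF assms(1)] by blast
  then have "I = X" using assms card_subset_eq by auto
  thus ?thesis using \<open>indep M I\<close> by simp
qed

lemma rank_le_gnd: assumes "matroid M" shows "rank M X \<le> rank M (gnd M)"
proof -
  obtain I where "I \<subseteq> X" "indep M I" "card I = rank M X" using rank_obtain[OF assms(1)] by blast
  thus ?thesis using rank_ge[OF assms(1), of I "gnd M"] m_sub[OF assms] by auto
qed

lemma rank_Int_gnd: assumes "matroid M" shows "rank M X = rank M (X \<inter> gnd M)"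
proof -
  have "{card I | I. I \<subseteq> X \<and> indep M I} = {card I | I. I \<subseteq> X \<inter> gnd M \<and> indep M I}"
    using m_sub[OF assms] by blast
  thus ?thesis by (simp add: rank_def)
qed

lemma rank_extend_aux: assumes "matroid M"
  shows "rank M X - card I = n \<Longrightarrow> indep M I \<Longrightarrow> I \<subseteq> X \<Longrightarrow> \<exists>J. I \<subseteq> J \<and> J \<subseteq> X \<and> indep M J \<and> card J = rank M X"
proof (induction n arbitrary: I)
  case 0
  then show ?case using rank_ge[OF assms, of I X] by auto
next
  case (Suc n)
  obtain J0 where J0: "J0 \<subseteq> X" "indep M J0" "card J0 = rank M X" using rank_obtain[OF assms] by blast
  have "card I < card J0" using Suc.prems J0 by simp
  then obtain e where e: "e \<in> J0 - I" "indep M (insert e I)" using m_aug[OF assms Suc.prems(2) J0(2)] by blast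
  have fI: "finite I" using m_ifin[OF assms Suc.prems(2)] .
  have "rank M X - card (insert e I) = n" using Suc.prems(1) e(1) fI by simp
  moreover have "insert e I \<subseteq> X" using e J0 Suc.prems by blast
  ultimately obtain J where "insert e I \<subseteq> J" "J \<subseteq> X" "indep M J" "card J = rank M X"
    using Suc.IH e(2) by blast
  thus ?case by blast
qed

lemma rank_extend: assumes "matroid M" "indep M I" "I \<subseteq> X"
  obtains J where "I \<subseteq> J" "J \<subseteq> X" "indep M J" "card J = rank M X"
  using rank_extend_aux[OF assms(1) refl assms(2,3)] by blast

lemma rank_submod: assumes "matroid M"
  shows "rank M (X \<union> Y) + rank M (X \<inter> Y) \<le> rank M X + rank M Y"
proof -
  obtain I where I: "I \<subseteq> X \<inter> Y" "indep M I" "card I = rank M (X \<inter> Y)" using rank_obtain[OF assms] by blast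
  have IXY: "I \<subseteq> X \<union> Y" using I(1) by blast
  from rank_extend[OF assms I(2) IXY]
  obtain J where J: "I \<subseteq> J" "J \<subseteq> X \<union> Y" "indep M J" "card J = rank M (X \<union> Y)" .
  have fJ: "finite J" using m_ifin[OF assms J(3)] .
  have "card (J \<inter> X) \<le> rank M X" by (rule rank_ge[OF assms m_down[OF assms J(3)]]) auto
  moreover have "card (J \<inter> Y) \<le> rank M Y" by (rule rank_ge[OF assms m_down[OF assms J(3)]]) auto
  moreover have "card (J \<inter> X) + card (J \<inter> Y) = card J + card ((J \<inter> X) \<inter> (J \<inter> Y))"
  proof -
    have "card (J \<inter> X) + card (J \<inter> Y) = card ((J \<inter> X) \<union> (J \<inter> Y)) + card ((J \<inter> X) \<inter> (J \<inter> Y))"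
      by (rule card_Un_Int) (simp_all add: fJ)
    moreover have "(J \<inter> X) \<union> (J \<inter> Y) = J" using J(2) by blast
    ultimately show ?thesis by simp
  qed
  moreover have "card I \<le> card ((J \<inter> X) \<inter> (J \<inter> Y))"
    using I(1) J(1) fJ by (intro card_mono) (simp, blast)
  ultimately show ?thesis using I J by linarith
qed

lemma rank_insert_le: assumes "matroid M" shows "rank M (insert e X) \<le> rank M X + 1"
proof -
  obtain I where I: "I \<subseteq> insert e X" "indep M I" "card I = rank M (insert e X)" using rank_obtain[OF assms] by blast
  have "card (I - {e}) \<le> rank M X" using I by (intro rank_ge[OF assms m_down[OF assms I(2)]]) auto
  moreover have "card I \<le> card (I - {e}) + 1" using m_ifin[OF assms I(2)]
    by (cases "e \<in> I") (auto simp: card_Diff_singleton card_gt_0_iff)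
  ultimately show ?thesis using I by linarith
qed

lemma rank_union_le: assumes "matroid M" "finite Z" shows "rank M (X \<union> Z) \<le> rank M X + card Z"
  using assms(2)
proof (induction Z rule: finite_induct)
  case empty then show ?case by simp
next
  case (insert z F)
  have "rank M (X \<union> insert z F) = rank M (insert z (X \<union> F))" by simp
  also have "\<dots> \<le> rank M (X \<union> F) + 1" by (rule rank_insert_le[OF assms(1)])
  finally show ?case using insert by simp
qed

lemma rank_closure: assumes "matroid M" "rank M (insert x A) = rank M A" "A \<subseteq> B"
  shows "rank M (insert x B) = rank M B"
proof (cases "x \<in> B")
  case True then show ?thesis by (simp add: insert_absorb)
next
  case False
  have "insert x A \<union> B = insert x B" "insert x A \<inter> B = A" using False assms(3) by auto
  then have "rank M (insert x B) + rank M A \<le> rank M (insert x A) + rank M B"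
    using rank_submod[OF assms(1), of "insert x A" B] by simp
  moreover have "rank M B \<le> rank M (insert x B)" by (rule rank_mono[OF assms(1)]) auto
  ultimately show ?thesis using assms(2) by linarith
qed

lemma rank_closure_set: assumes "matroid M" "finite Z" "\<forall>z\<in>Z. rank M (insert z X) = rank M X"
  shows "rank M (X \<union> Z) = rank M X"
  using assms(2,3)
proof (induction Z rule: finite_induct)
  case empty then show ?case by simp
next
  case (insert z F)
  have "rank M (insert z (X \<union> F)) = rank M (X \<union> F)"
    using rank_closure[OF assms(1), of z X "X \<union> F"] insert.prems by auto
  then show ?case using insert by simp
qed



lemma basis_iff: assumes "matroid M" shows "basis M B \<longleftrightarrow> indep M B \<and> card B = rank M (gnd M)"
proof
  assume b: "basis M B"
  then have iB: "indep M B" by (simp add: basis_def)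
  from rank_extend[OF assms iB m_sub[OF assms iB]]
  obtain J where J: "B \<subseteq> J" "J \<subseteq> gnd M" "indep M J" "card J = rank M (gnd M)" .
  have "J = B" using b J(1,3) unfolding basis_def by blast
  thus "indep M B \<and> card B = rank M (gnd M)" using iB J by simp
next
  assume a: "indep M B \<and> card B = rank M (gnd M)"
  have "B' = B" if "indep M B'" "B \<subseteq> B'" for B'
  proof -
    have "card B' \<le> rank M (gnd M)" using rank_ge[OF assms that(1) m_sub[OF assms that(1)]] .
    thus ?thesis using a that card_subset_eq[OF m_ifin[OF assms that(1)] that(2)] card_mono[OF m_ifin[OF assms that(1)] that(2)]
      by simp
  qed
  thus "basis M B" using a unfolding basis_def by blast
qed

lemma coloop_iff: assumes "matroid M"
  shows "coloop M e \<longleftrightarrow> e \<in> gnd M \<and> rank M (gnd M - {e}) < rank M (gnd M)"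
proof
  assume c: "coloop M e"
  show "e \<in> gnd M \<and> rank M (gnd M - {e}) < rank M (gnd M)"
  proof (rule ccontr)
    assume "\<not> ?thesis"
    then have ge: "rank M (gnd M) \<le> rank M (gnd M - {e})" using c by (simp add: coloop_def)
    obtain I where I: "I \<subseteq> gnd M - {e}" "indep M I" "card I = rank M (gnd M - {e})" using rank_obtain[OF assms] by blast
    have "rank M (gnd M - {e}) \<le> rank M (gnd M)" by (rule rank_mono[OF assms]) auto
    then have "basis M I" using basis_iff[OF assms] I ge by simp
    then have "e \<in> I" using c by (simp add: coloop_def)
    thus False using I(1) by blast
  qed
next
  assume a: "e \<in> gnd M \<and> rank M (gnd M - {e}) < rank M (gnd M)"
  have "e \<in> B" if "basis M B" for B
  proof (rule ccontr)
    assume "e \<notin> B"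
    have iB: "indep M B" "card B = rank M (gnd M)" using that basis_iff[OF assms] by auto
    have "B \<subseteq> gnd M - {e}" using m_sub[OF assms iB(1)] \<open>e \<notin> B\<close> by blast
    then have "card B \<le> rank M (gnd M - {e})" by (rule rank_ge[OF assms iB(1)])
    thus False using a iB by simp
  qed
  thus "coloop M e" using a by (simp add: coloop_def)
qed

lemma gnd_delete[simp]: "gnd (delete M D) = gnd M - D" by (simp add: delete_def gnd_def)
lemma indep_delete[simp]: "indep (delete M D) I \<longleftrightarrow> indep M I \<and> I \<subseteq> gnd M - D"
  by (simp add: delete_def indep_def gnd_def)
lemma gnd_contract[simp]: "gnd (contract M C) = gnd M - C" by (simp add: contract_def gnd_def)
lemma indep_contract[simp]: "indep (contract M C) I \<longleftrightarrow> I \<subseteq> gnd M - C \<and> rank M (I \<union> C) = card I + rank M C"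
  by (simp add: contract_def indep_def gnd_def)

lemma matroid_eqI: assumes "gnd M1 = gnd M2" "\<And>I. indep M1 I = indep M2 I" shows "M1 = M2"
proof -
  have "fst M1 = fst M2" using assms(1) by (simp add: gnd_def)
  moreover have "snd M1 = snd M2" using assms(2) by (simp add: indep_def fun_eq_iff)
  ultimately show ?thesis by (simp add: prod_eq_iff)
qed

lemma matroid_delete: assumes "matroid M" shows "matroid (delete M D)"
proof -
  have "finite (gnd (delete M D))" using m_fin[OF assms] by simp
  moreover have "indep (delete M D) {}" using m_empty[OF assms] by simp
  moreover have "\<forall>I. indep (delete M D) I \<longrightarrow> I \<subseteq> gnd (delete M D)" by simp
  moreover have "\<forall>I J. indep (delete M D) J \<and> I \<subseteq> J \<longrightarrow> indep (delete M D) I"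
    using m_down[OF assms] by auto
  moreover have "\<forall>I J. indep (delete M D) I \<and> indep (delete M D) J \<and> card I < card J \<longrightarrow>
        (\<exists>e \<in> J - I. indep (delete M D) (insert e I))"
  proof (intro allI impI)
    fix I J assume h: "indep (delete M D) I \<and> indep (delete M D) J \<and> card I < card J"
    have "\<exists>e\<in>J - I. indep M (insert e I)" using h m_aug[OF assms] by auto
    then obtain e where "e \<in> J - I" "indep M (insert e I)" by blast
    thus "\<exists>e \<in> J - I. indep (delete M D) (insert e I)" using h by auto
  qed
  ultimately show ?thesis unfolding matroid_def by blast
qed

lemma rank_delete: assumes "matroid M" shows "rank (delete M D) X = rank M (X - D)"
proof -
  have "{card I | I. I \<subseteq> X \<and> indep (delete M D) I} = {card I | I. I \<subseteq> X - D \<and> indep M I}"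
    using m_sub[OF assms] by auto
  thus ?thesis by (simp add: rank_def)
qed

lemma contract_down: assumes "matroid M" "C \<subseteq> gnd M" "indep (contract M C) J" "I \<subseteq> J"
  shows "indep (contract M C) I"
proof -
  have fJ: "finite J" using assms(3) m_fin[OF assms(1)] finite_subset by (metis Diff_subset indep_contract)
  have "J \<union> C = (I \<union> C) \<union> (J - I)" using assms(4) by blast
  then have "rank M (J \<union> C) \<le> rank M (I \<union> C) + card (J - I)"
    using rank_union_le[OF assms(1), of "J - I" "I \<union> C"] fJ by simp
  moreover have "card J = card I + card (J - I)" using fJ assms(4)
    by (metis card_Diff_subset card_mono finite_subset le_add_diff_inverse)
  moreover have "rank M (C \<union> I) \<le> rank M C + card I"
    using rank_union_le[OF assms(1)] fJ assms(4) finite_subset by blast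
  moreover have "C \<union> I = I \<union> C" by blast
  ultimately show ?thesis using assms(3,4) by auto
qed

lemma matroid_contract: assumes "matroid M" "C \<subseteq> gnd M" shows "matroid (contract M C)"
proof -
  have "finite (gnd (contract M C))" using m_fin[OF assms(1)] by simp
  moreover have "indep (contract M C) {}" by simp
  moreover have "\<forall>I. indep (contract M C) I \<longrightarrow> I \<subseteq> gnd (contract M C)" by simp
  moreover have "\<forall>I J. indep (contract M C) J \<and> I \<subseteq> J \<longrightarrow> indep (contract M C) I"
    using contract_down[OF assms] by blast
  moreover have "\<forall>I J. indep (contract M C) I \<and> indep (contract M C) J \<and> card I < card J \<longrightarrow>
        (\<exists>e \<in> J - I. indep (contract M C) (insert e I))"
  proof (intro allI impI)
    fix I J assume h: "indep (contract M C) I \<and> indep (contract M C) J \<and> card I < card J"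
    have fJ: "finite J" using h m_fin[OF assms(1)] finite_subset by (metis Diff_subset indep_contract)
    have fI: "finite I" using h m_fin[OF assms(1)] finite_subset by (metis Diff_subset indep_contract)
    show "\<exists>e \<in> J - I. indep (contract M C) (insert e I)"
    proof (rule ccontr)
      assume n: "\<not> ?thesis"
      have "rank M (insert e (I \<union> C)) = rank M (I \<union> C)" if e: "e \<in> J - I" for e
      proof -
        have "insert e I \<subseteq> gnd M - C" using e h by auto
        then have ne: "rank M (insert e I \<union> C) \<noteq> card (insert e I) + rank M C" using n e by auto
        have "card (insert e I) = card I + 1" using e fI by simp
        moreover have "rank M (insert e (I \<union> C)) \<le> rank M (I \<union> C) + 1" by (rule rank_insert_le[OF assms(1)])
        moreover have "rank M (I \<union> C) \<le> rank M (insert e (I \<union> C))" by (rule rank_mono[OF assms(1)]) auto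
        ultimately show ?thesis using ne h by simp
      qed
      then have "rank M ((I \<union> C) \<union> (J - I)) = rank M (I \<union> C)"
        using rank_closure_set[OF assms(1)] fJ by blast
      moreover have "rank M (J \<union> C) \<le> rank M ((I \<union> C) \<union> (J - I))" by (rule rank_mono[OF assms(1)]) auto
      ultimately show False using h by simp
    qed
  qed
  ultimately show ?thesis unfolding matroid_def by blast
qed

lemma rank_contract: assumes "matroid M" "C \<subseteq> gnd M"
  shows "rank (contract M C) X = rank M ((X \<inter> (gnd M - C)) \<union> C) - rank M C"
proof -
  define X' where "X' = X \<inter> (gnd M - C)"
  define S where "S = {card I | I. I \<subseteq> X \<and> indep (contract M C) I}"
  have fE: "finite (gnd M)" using m_fin[OF assms(1)] .
  have fS: "finite S"
  proof -
    have "S \<subseteq> card ` Pow (gnd M)" unfolding S_def by auto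
    moreover have "finite (card ` Pow (gnd M))" using fE by simp
    ultimately show ?thesis by (rule finite_subset)
  qed
  have ub: "y \<le> rank M (X' \<union> C) - rank M C" if "y \<in> S" for y
  proof -
    obtain I where I: "y = card I" "I \<subseteq> X" "indep (contract M C) I" using \<open>y \<in> S\<close> unfolding S_def by blast
    have "rank M (I \<union> C) \<le> rank M (X' \<union> C)" using I unfolding X'_def by (intro rank_mono[OF assms(1)]) auto
    thus ?thesis using I by simp
  qed
  obtain BC where BC: "BC \<subseteq> C" "indep M BC" "card BC = rank M C" using rank_obtain[OF assms(1)] by blast
  have "BC \<subseteq> X' \<union> C" using BC by blast
  from rank_extend[OF assms(1) BC(2) this]
  obtain J where J: "BC \<subseteq> J" "J \<subseteq> X' \<union> C" "indep M J" "card J = rank M (X' \<union> C)" .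
  have fJ: "finite J" using m_ifin[OF assms(1) J(3)] .
  have "card (J \<inter> C) \<le> rank M C" by (rule rank_ge[OF assms(1) m_down[OF assms(1) J(3)]]) auto
  then have JC: "J \<inter> C = BC" using BC J(1) fJ card_subset_eq[of "J \<inter> C" BC]
    by (metis Int_greatest card_mono finite_Int le_antisym)
  define I where "I = J - C"
  have JI: "J = I \<union> BC" "I \<inter> BC = {}" using JC BC unfolding I_def by blast+
  have fI: "finite I" using fJ unfolding I_def by simp
  have cJ: "card J = card I + card BC" using JI fI m_ifin[OF assms(1) BC(2)] by (simp add: card_Un_disjoint)
  have "rank M J \<le> rank M (I \<union> C)" using JI BC by (intro rank_mono[OF assms(1)]) auto
  moreover have "rank M (C \<union> I) \<le> rank M C + card I" by (rule rank_union_le[OF assms(1) fI])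
  moreover have "C \<union> I = I \<union> C" by blast
  ultimately have "rank M (I \<union> C) = card I + rank M C"
    using rank_indep[OF assms(1) J(3)] cJ BC by simp
  moreover have "I \<subseteq> X" "I \<subseteq> gnd M - C" using J(2) unfolding I_def X'_def by blast+
  ultimately have "card I \<in> S" unfolding S_def by auto
  moreover have "card I = rank M (X' \<union> C) - rank M C" using cJ J BC by simp
  ultimately have "Max S = rank M (X' \<union> C) - rank M C" using Max_eqI[OF fS ub] by simp
  thus ?thesis unfolding rank_def S_def X'_def by simp
qed

lemma rank_minor: assumes "matroid M" "C \<subseteq> gnd M"
  shows "rank (delete (contract M C) D) X = rank M (((X - D) \<inter> (gnd M - C)) \<union> C) - rank M C"
  using rank_delete[OF matroid_contract[OF assms]] rank_contract[OF assms] by simp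

lemma matroid_minor: assumes "matroid M" "C \<subseteq> gnd M" shows "matroid (delete (contract M C) D)"
  by (rule matroid_delete[OF matroid_contract[OF assms]])

lemma loop_minor_iff: assumes "matroid M" "C \<subseteq> gnd M"
  shows "loop (delete (contract M C) D) y \<longleftrightarrow> y \<in> gnd M - C - D \<and> rank M (insert y C) = rank M C"
proof -
  have "rank M (insert y C) \<le> rank M C + 1" by (rule rank_insert_le[OF assms(1)])
  moreover have "rank M C \<le> rank M (insert y C)" by (rule rank_mono[OF assms(1)]) auto
  ultimately show ?thesis unfolding loop_def by auto
qed

lemma coloop_minor_iff: assumes "matroid M" "C \<subseteq> gnd M" "C \<inter> D = {}"
  shows "coloop (delete (contract M C) D) y \<longleftrightarrow> y \<in> gnd M - C - D \<and> rank M (gnd M - D - {y}) < rank M (gnd M - D)"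
proof -
  let ?N = "delete (contract M C) D"
  have "coloop ?N y \<longleftrightarrow> y \<in> gnd ?N \<and> rank ?N (gnd ?N - {y}) < rank ?N (gnd ?N)"
    by (rule coloop_iff[OF matroid_minor[OF assms(1,2)]])
  also have "\<dots> \<longleftrightarrow> y \<in> gnd M - C - D \<and> rank M (gnd M - D - {y}) < rank M (gnd M - D)"
  proof (cases "y \<in> gnd M - C - D")
    case True
    have e1: "((gnd M - C - D - {y} - D) \<inter> (gnd M - C)) \<union> C = gnd M - D - {y}" using True assms by blast
    have e2: "((gnd M - C - D - D) \<inter> (gnd M - C)) \<union> C = gnd M - D" using True assms by blast
    have m1: "rank M C \<le> rank M (gnd M - D - {y})" using True assms by (intro rank_mono[OF assms(1)]) auto
    have m2: "rank M C \<le> rank M (gnd M - D)" using True assms by (intro rank_mono[OF assms(1)]) auto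
    have r1: "rank ?N (gnd ?N - {y}) = rank M (gnd M - D - {y}) - rank M C"
      using rank_minor[OF assms(1,2), of D "gnd ?N - {y}"] unfolding gnd_delete gnd_contract e1 .
    have r2: "rank ?N (gnd ?N) = rank M (gnd M - D) - rank M C"
      using rank_minor[OF assms(1,2), of D "gnd ?N"] unfolding gnd_delete gnd_contract e2 .
    show ?thesis using True m1 m2 r1 r2 by auto
  next
    case False then show ?thesis by auto
  qed
  finally show ?thesis .
qed

lemma compose_minor: assumes "matroid M" "C \<subseteq> gnd M" "D \<subseteq> gnd M" "C \<inter> D = {}"
  "X \<subseteq> gnd M - C - D" "Y \<subseteq> gnd M - C - D" "X \<inter> Y = {}"
  shows "delete (contract (delete (contract M C) D) X) Y = delete (contract M (C \<union> X)) (D \<union> Y)"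
proof (rule matroid_eqI)
  show "gnd (delete (contract (delete (contract M C) D) X) Y) = gnd (delete (contract M (C \<union> X)) (D \<union> Y))"
    by auto
next
  fix I
  let ?N = "delete (contract M C) D"
  show "indep (delete (contract ?N X) Y) I = indep (delete (contract M (C \<union> X)) (D \<union> Y)) I"
  proof (cases "I \<subseteq> gnd M - C - D - X - Y")
    case True
    have e1: "((I \<union> X - D) \<inter> (gnd M - C)) \<union> C = I \<union> (C \<union> X)" using True assms by blast
    have e2: "((X - D) \<inter> (gnd M - C)) \<union> C = C \<union> X" using True assms by blast
    have m1: "rank M C \<le> rank M (C \<union> X)" by (rule rank_mono[OF assms(1)]) auto
    have m2: "rank M (C \<union> X) \<le> rank M (I \<union> (C \<union> X))" by (rule rank_mono[OF assms(1)]) auto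
    have "indep (delete (contract ?N X) Y) I \<longleftrightarrow> rank ?N (I \<union> X) = card I + rank ?N X"
      using True by auto
    also have "\<dots> \<longleftrightarrow> rank M (I \<union> (C \<union> X)) = card I + rank M (C \<union> X)"
      using m1 m2 by (simp add: rank_minor[OF assms(1,2)] e1 e2, linarith)
    also have "\<dots> \<longleftrightarrow> indep (delete (contract M (C \<union> X)) (D \<union> Y)) I"
      using True rank_minor by auto
    finally show ?thesis .
  next
    case False
    then show ?thesis by auto
  qed
qed

lemma rank_empty: assumes "matroid M" shows "rank M {} = 0"
  using rank_le_card[OF assms, of "{}"] by simp

lemma normA: assumes "matroid M" "C \<subseteq> gnd M" "C1 \<subseteq> C" "rank M C1 = rank M C"
  shows "delete (contract M C) D = delete (contract M C1) (D \<union> (C - C1))"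
proof (rule matroid_eqI)
  show "gnd (delete (contract M C) D) = gnd (delete (contract M C1) (D \<union> (C - C1)))" using assms by auto
next
  fix I
  have eq: "rank M (I \<union> C) = rank M (I \<union> C1)"
  proof -
    have "(I \<union> C1) \<union> C = I \<union> C" using assms by blast
    then have "rank M (I \<union> C) + rank M ((I \<union> C1) \<inter> C) \<le> rank M (I \<union> C1) + rank M C"
      using rank_submod[OF assms(1), of "I \<union> C1" C] by simp
    moreover have "rank M C1 \<le> rank M ((I \<union> C1) \<inter> C)" using assms by (intro rank_mono[OF assms(1)]) auto
    moreover have "rank M (I \<union> C1) \<le> rank M (I \<union> C)" using assms by (intro rank_mono[OF assms(1)]) auto
    ultimately show ?thesis using assms(4) by linarith
  qed
  show "indep (delete (contract M C) D) I = indep (delete (contract M C1) (D \<union> (C - C1))) I"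
    using eq assms(3,4) by auto
qed

lemma normB: assumes "Z \<subseteq> D"
  "\<And>I. I \<subseteq> gnd M - C - D \<Longrightarrow> rank M (I \<union> (C \<union> Z)) = rank M (I \<union> C) + card Z"
  shows "delete (contract M C) D = delete (contract M (C \<union> Z)) (D - Z)"
proof (rule matroid_eqI)
  show "gnd (delete (contract M C) D) = gnd (delete (contract M (C \<union> Z)) (D - Z))" using assms by auto
next
  fix I
  have z: "rank M (C \<union> Z) = rank M C + card Z" using assms(2)[of "{}"] by simp
  show "indep (delete (contract M C) D) I = indep (delete (contract M (C \<union> Z)) (D - Z)) I"
  proof (cases "I \<subseteq> gnd M - C - D")
    case True
    then show ?thesis using assms(2)[OF True] z assms(1) by auto
  next
    case False
    then show ?thesis using assms(1) by auto
  qed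
qed

lemma normalize: assumes "matroid M" "minor N M"
  shows "\<exists>C D. C \<subseteq> gnd M \<and> D \<subseteq> gnd M \<and> C \<inter> D = {} \<and> indep M C \<and>
     rank M (gnd M - D) = rank M (gnd M) \<and> N = delete (contract M C) D"
proof -
  obtain C D where CD: "C \<subseteq> gnd M" "D \<subseteq> gnd M" "C \<inter> D = {}" "N = delete (contract M C) D"
    using assms(2) unfolding minor_def by blast
  obtain C1 where C1: "C1 \<subseteq> C" "indep M C1" "card C1 = rank M C" using rank_obtain[OF assms(1)] by blast
  have rC1: "rank M C1 = rank M C" using rank_indep[OF assms(1) C1(2)] C1 by simp
  define D2 where "D2 = D \<union> (C - C1)"
  have N2: "N = delete (contract M C1) D2" using normA[OF assms(1) CD(1) C1(1) rC1] CD unfolding D2_def by simp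
  define A where "A = gnd M - D2"
  have C1A: "C1 \<subseteq> A" using C1 CD unfolding A_def D2_def by blast
  from rank_extend[OF assms(1) C1(2) C1A]
  obtain BA where BA: "C1 \<subseteq> BA" "BA \<subseteq> A" "indep M BA" "card BA = rank M A" .
  have "BA \<subseteq> gnd M" using BA unfolding A_def by blast
  from rank_extend[OF assms(1) BA(3) this]
  obtain B where B: "BA \<subseteq> B" "B \<subseteq> gnd M" "indep M B" "card B = rank M (gnd M)" .
  have fB: "finite B" using m_ifin[OF assms(1) B(3)] .
  have "card (B \<inter> A) \<le> rank M A" by (rule rank_ge[OF assms(1) m_down[OF assms(1) B(3)]]) auto
  moreover have "BA \<subseteq> B \<inter> A" using B BA by blast
  moreover have "card BA \<le> card (B \<inter> A)" using calculation(2) fB by (intro card_mono) auto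
  ultimately have BAeq: "B \<inter> A = BA" using card_subset_eq[of "B \<inter> A" BA] fB BA(4) by simp
  define Z where "Z = B - BA"
  have ZD2: "Z \<subseteq> D2" using BAeq B(2) unfolding Z_def A_def by blast
  have ZA: "Z \<inter> A = {}" using BAeq unfolding Z_def by blast
  have BZ: "B = BA \<union> Z" "BA \<inter> Z = {}" using B(1) unfolding Z_def by blast+
  have fZ: "finite Z" using fB unfolding Z_def by simp
  have cB: "card B = card BA + card Z" using BZ fZ fB by (simp add: card_Un_disjoint)
  have key: "rank M (I \<union> (C1 \<union> Z)) = rank M (I \<union> C1) + card Z" if I: "I \<subseteq> gnd M - C1 - D2" for I
  proof -
    have h1: "rank M (I \<union> (C1 \<union> Z)) \<le> rank M (I \<union> C1) + card Z"
      using rank_union_le[OF assms(1) fZ, of "I \<union> C1"] by (simp add: Un_assoc)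
    have ia: "(I \<union> (C1 \<union> Z)) \<inter> A = I \<union> C1" using I C1A ZA unfolding A_def by blast
    have h2: "rank M ((I \<union> (C1 \<union> Z)) \<union> A) + rank M (I \<union> C1) \<le> rank M (I \<union> (C1 \<union> Z)) + rank M A"
      using rank_submod[OF assms(1), of "I \<union> (C1 \<union> Z)" A] unfolding ia .
    have h3: "card B \<le> rank M ((I \<union> (C1 \<union> Z)) \<union> A)"
      using BZ BA(2) by (intro rank_ge[OF assms(1) B(3)]) blast
    show ?thesis using h1 h2 h3 cB BA(4) by linarith
  qed
  have N3: "N = delete (contract M (C1 \<union> Z)) (D2 - Z)" using normB[OF ZD2 key] N2 by simp
  have "C1 \<union> Z \<subseteq> B" using BA(1) B(1) unfolding Z_def by blast
  then have iC: "indep M (C1 \<union> Z)" by (rule m_down[OF assms(1) B(3)])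
  have "B \<subseteq> gnd M - (D2 - Z)" using B(2) BAeq unfolding Z_def A_def by blast
  then have "card B \<le> rank M (gnd M - (D2 - Z))" by (rule rank_ge[OF assms(1) B(3)])
  then have cod: "rank M (gnd M - (D2 - Z)) = rank M (gnd M)" using B(4) rank_le_gnd[OF assms(1)] by (metis le_antisym)
  have "C1 \<union> Z \<subseteq> gnd M" using C1 CD ZD2 unfolding D2_def by blast
  moreover have "D2 - Z \<subseteq> gnd M" using CD unfolding D2_def by blast
  moreover have "(C1 \<union> Z) \<inter> (D2 - Z) = {}" using C1 CD unfolding D2_def by blast
  ultimately show ?thesis using iC cod N3 by (intro exI[of _ "C1 \<union> Z"] exI[of _ "D2 - Z"]) simp
qed

definition lcs :: "'a matroid \<Rightarrow> 'a set \<Rightarrow> 'a set \<Rightarrow> 'a set" where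
  "lcs M C D = {y \<in> gnd M - C - D. rank M (insert y C) = rank M C \<or> rank M (gnd M - D - {y}) < rank M (gnd M - D)}"

lemma lcs_eq: assumes "matroid M" "C \<subseteq> gnd M" "C \<inter> D = {}"
  shows "{e. loop (delete (contract M C) D) e \<or> coloop (delete (contract M C) D) e} = lcs M C D"
proof -
  have "\<And>e. (loop (delete (contract M C) D) e \<or> coloop (delete (contract M C) D) e) \<longleftrightarrow> e \<in> lcs M C D"
    by (simp add: lcs_def loop_minor_iff[OF assms(1,2)] coloop_minor_iff[OF assms]) blast
  thus ?thesis by blast
qed

lemma lcs_fin: assumes "matroid M" shows "finite (lcs M C D)"
  using m_fin[OF assms] unfolding lcs_def by simp

lemma min_subset: assumes "finite A" "P A" shows "\<exists>B\<subseteq>A. P B \<and> (\<forall>B'. B' \<subset> B \<longrightarrow> \<not> P B')"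
  using assms
proof (induction A rule: finite_psubset_induct)
  case (psubset A)
  show ?case
  proof (cases "\<forall>B'. B' \<subset> A \<longrightarrow> \<not> P B'")
    case True then show ?thesis using psubset.prems by (intro exI[of _ A]) simp
  next
    case False
    then obtain B' where B': "B' \<subset> A" "P B'" by blast
    from psubset.IH[OF B'] obtain B where "B \<subseteq> B'" "P B" "\<forall>B''. B'' \<subset> B \<longrightarrow> \<not> P B''" by blast
    thus ?thesis using B'(1) by (intro exI[of _ B]) auto
  qed
qed

lemma stepA: assumes M: "matroid M" and nl: "\<forall>e\<in>gnd M. rank M {e} = 1"
  and CE: "C \<subseteq> gnd M" and CD: "C \<inter> D = {}" and iC: "indep M C"
  and eL: "e \<in> lcs M C D" and eqA: "rank M (insert e C) = rank M C"
  shows "\<exists>x\<in>C. lcs M (C - {x}) D \<subseteq> lcs M C D - {e}"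
proof -
  have e: "e \<in> gnd M" "e \<notin> C" "e \<notin> D" using eL unfolding lcs_def by auto
  have fC: "finite C" using m_ifin[OF M iC] .
  have "\<exists>B\<subseteq>C. rank M (insert e B) = rank M B \<and> (\<forall>B'. B' \<subset> B \<longrightarrow> \<not> rank M (insert e B') = rank M B')"
    using min_subset[OF fC, of "\<lambda>B. rank M (insert e B) = rank M B"] eqA by simp
  then obtain C0 where C0: "C0 \<subseteq> C" "rank M (insert e C0) = rank M C0"
    "\<forall>B'. B' \<subset> C0 \<longrightarrow> rank M (insert e B') \<noteq> rank M B'" by blast
  have "C0 \<noteq> {}"
  proof
    assume "C0 = {}"
    then have "rank M {e} = 0" using C0(2) rank_empty[OF M] by simp
    thus False using nl e(1) by simp
  qed
  then obtain x where x: "x \<in> C0" by blast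
  have xC: "x \<in> C" using x C0(1) by blast
  have xD: "x \<notin> D" using xC CD by blast
  have xE: "x \<in> gnd M" using xC CE by blast
  have iC0: "indep M C0" using m_down[OF M iC C0(1)] .
  have fC0: "finite C0" using m_ifin[OF M iC0] .
  have rC: "rank M C = card C" by (rule rank_indep[OF M iC])
  have rC0: "rank M C0 = card C0" by (rule rank_indep[OF M iC0])
  have iCx: "indep M (C - {x})" by (rule m_down[OF M iC]) blast
  have iC0x: "indep M (C0 - {x})" by (rule m_down[OF M iC0]) blast
  have rCx: "rank M (C - {x}) = card C - 1" using rank_indep[OF M iCx] xC fC by simp
  have rC0x: "rank M (C0 - {x}) = card C0 - 1" using rank_indep[OF M iC0x] x fC0 by simp
  have cC: "card C \<ge> 1" using card_mono[OF fC, of "{x}"] xC by simp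
  have cC0: "card C0 \<ge> 1" using card_mono[OF fC0, of "{x}"] x by simp
  have ne: "rank M (insert e (C - {x})) \<noteq> rank M (C - {x})"
  proof
    assume eqx: "rank M (insert e (C - {x})) = rank M (C - {x})"
    have u: "insert e C0 \<union> insert e (C - {x}) = insert e C" using x C0(1) by blast
    have i: "insert e C0 \<inter> insert e (C - {x}) = insert e (C0 - {x})" using C0(1) e by blast
    have sm: "rank M (insert e C) + rank M (insert e (C0 - {x})) \<le> rank M (insert e C0) + rank M (insert e (C - {x}))"
      using rank_submod[OF M, of "insert e C0" "insert e (C - {x})"] unfolding u i .
    have "rank M C \<le> rank M (insert e C)" by (rule rank_mono[OF M]) auto
    moreover have "rank M (C0 - {x}) \<le> rank M (insert e (C0 - {x}))" by (rule rank_mono[OF M]) auto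
    ultimately have "rank M (insert e (C0 - {x})) = rank M (C0 - {x})"
      using sm eqx C0(2) rC rC0 rCx rC0x cC cC0 by linarith
    moreover have "C0 - {x} \<subset> C0" using x by blast
    ultimately show False using C0(3) by blast
  qed
  have rex: "rank M (insert e (C - {x})) = card C"
  proof -
    have "rank M (insert e (C - {x})) \<le> rank M (C - {x}) + 1" by (rule rank_insert_le[OF M])
    moreover have "rank M (C - {x}) \<le> rank M (insert e (C - {x}))" by (rule rank_mono[OF M]) auto
    ultimately show ?thesis using ne rCx cC by linarith
  qed
  have f3: "rank M (gnd M - D - {x}) = rank M (gnd M - D)"
  proof -
    have a: "insert x (insert e (C - {x})) = insert e C" using xC by blast
    have "rank M (insert x (insert e (C - {x}))) = rank M (insert e (C - {x}))"
      unfolding a using eqA rC rex by simp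
    moreover have "insert e (C - {x}) \<subseteq> gnd M - D - {x}" using e CE CD xC by blast
    ultimately have "rank M (insert x (gnd M - D - {x})) = rank M (gnd M - D - {x})" by (rule rank_closure[OF M])
    moreover have "insert x (gnd M - D - {x}) = gnd M - D" using xD xE by blast
    ultimately show ?thesis by simp
  qed
  have f4: "rank M (gnd M - D - {e}) = rank M (gnd M - D)"
  proof -
    have "C \<subseteq> gnd M - D - {e}" using e CE CD by blast
    then have "rank M (insert e (gnd M - D - {e})) = rank M (gnd M - D - {e})" by (rule rank_closure[OF M eqA])
    moreover have "insert e (gnd M - D - {e}) = gnd M - D" using e by blast
    ultimately show ?thesis by simp
  qed
  have "lcs M (C - {x}) D \<subseteq> lcs M C D - {e}"
  proof
    fix y assume y: "y \<in> lcs M (C - {x}) D"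
    then have yE: "y \<in> gnd M - (C - {x}) - D" and
      yc: "rank M (insert y (C - {x})) = rank M (C - {x}) \<or> rank M (gnd M - D - {y}) < rank M (gnd M - D)"
      unfolding lcs_def by auto
    have ins1: "insert x (C - {x}) = C" using xC by blast
    have "y \<noteq> x"
    proof
      assume yx: "y = x"
      have "rank M (insert y (C - {x})) = card C" unfolding yx ins1 by (rule rC)
      then have "rank M (insert y (C - {x})) \<noteq> rank M (C - {x})" using rCx cC by linarith
      moreover have "\<not> rank M (gnd M - D - {y}) < rank M (gnd M - D)" using f3 unfolding yx by simp
      ultimately show False using yc by blast
    qed
    moreover have "y \<noteq> e"
    proof
      assume ye: "y = e"
      have "\<not> rank M (gnd M - D - {y}) < rank M (gnd M - D)" using f4 unfolding ye by simp
      thus False using yc ne unfolding ye by blast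
    qed
    moreover have "rank M (insert y C) = rank M C \<or> rank M (gnd M - D - {y}) < rank M (gnd M - D)"
    proof (cases "rank M (insert y (C - {x})) = rank M (C - {x})")
      case True
      then have "rank M (insert y C) = rank M C" by (rule rank_closure[OF M]) auto
      then show ?thesis by simp
    next
      case False then show ?thesis using yc by simp
    qed
    moreover have "y \<in> gnd M - C - D" using yE \<open>y \<noteq> x\<close> by blast
    ultimately show "y \<in> lcs M C D - {e}" unfolding lcs_def by blast
  qed
  thus ?thesis using xC by blast
qed

lemma stepB: assumes M: "matroid M" and nc: "\<forall>e\<in>gnd M. rank M (gnd M - {e}) = rank M (gnd M)"
  and CE: "C \<subseteq> gnd M" and DE: "D \<subseteq> gnd M" and CD: "C \<inter> D = {}"
  and cod: "rank M (gnd M - D) = rank M (gnd M)"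
  and eL: "e \<in> lcs M C D" and neA: "rank M (insert e C) \<noteq> rank M C"
  shows "\<exists>x\<in>D. lcs M C (D - {x}) \<subseteq> lcs M C D - {e} \<and> rank M (gnd M - (D - {x})) = rank M (gnd M)"
proof -
  have e: "e \<in> gnd M" "e \<notin> C" "e \<notin> D" using eL unfolding lcs_def by auto
  define S where "S = gnd M - D - {e}"
  have hB: "rank M S < rank M (gnd M - D)" using eL neA unfolding lcs_def S_def by auto
  have ES: "insert e S = gnd M - D" using e unfolding S_def by blast
  have "rank M (insert e S) \<le> rank M S + 1" by (rule rank_insert_le[OF M])
  then have rS: "rank M S + 1 = rank M (gnd M)" using hB ES cod by simp
  have fD: "finite D" using DE m_fin[OF M] by (rule finite_subset)
  have "\<exists>x\<in>D. rank M (insert x S) \<noteq> rank M S"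
  proof (rule ccontr)
    assume "\<not> ?thesis"
    then have "\<forall>x\<in>D. rank M (insert x S) = rank M S" by blast
    then have "rank M (S \<union> D) = rank M S" by (rule rank_closure_set[OF M fD])
    moreover have "S \<union> D = gnd M - {e}" using DE e unfolding S_def by blast
    ultimately show False using nc e(1) rS by simp
  qed
  then obtain x where xD: "x \<in> D" and xS: "rank M (insert x S) \<noteq> rank M S" by blast
  have xE: "x \<in> gnd M" using xD DE by blast
  have xe: "x \<noteq> e" using xD e by blast
  have rxS: "rank M (insert x S) = rank M (gnd M)"
  proof -
    have "rank M S \<le> rank M (insert x S)" by (rule rank_mono[OF M]) auto
    moreover have "rank M (insert x S) \<le> rank M (gnd M)" by (rule rank_le_gnd[OF M])
    ultimately show ?thesis using xS rS by linarith
  qed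
  have cod2: "rank M (gnd M - (D - {x})) = rank M (gnd M)"
  proof -
    have "rank M (gnd M - D) \<le> rank M (gnd M - (D - {x}))" by (rule rank_mono[OF M]) auto
    thus ?thesis using cod rank_le_gnd[OF M, of "gnd M - (D - {x})"] by linarith
  qed
  have CS: "C \<subseteq> S" using CE CD e unfolding S_def by blast
  have "lcs M C (D - {x}) \<subseteq> lcs M C D - {e}"
  proof
    fix y assume y: "y \<in> lcs M C (D - {x})"
    then have yE: "y \<in> gnd M - C - (D - {x})" and
      yc: "rank M (insert y C) = rank M C \<or> rank M (gnd M - (D - {x}) - {y}) < rank M (gnd M - (D - {x}))"
      unfolding lcs_def by auto
    have "y \<noteq> x"
    proof
      assume yx: "y = x"
      have "rank M (insert x C) \<noteq> rank M C"
      proof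
        assume "rank M (insert x C) = rank M C"
        then have "rank M (insert x S) = rank M S" by (rule rank_closure[OF M _ CS])
        thus False using xS by simp
      qed
      moreover have "gnd M - (D - {x}) - {x} = gnd M - D" using xD by blast
      ultimately show False using yc yx cod cod2 by simp
    qed
    moreover have "y \<noteq> e"
    proof
      assume ye: "y = e"
      have "gnd M - (D - {x}) - {e} = insert x S" using xE xe unfolding S_def by blast
      thus False using yc ye neA rxS cod2 by simp
    qed
    moreover have "rank M (insert y C) = rank M C \<or> rank M (gnd M - D - {y}) < rank M (gnd M - D)"
    proof (cases "rank M (insert y C) = rank M C")
      case True then show ?thesis by simp
    next
      case False
      then have lt: "rank M (gnd M - (D - {x}) - {y}) < rank M (gnd M - (D - {x}))" using yc by simp
      show ?thesis
      proof (rule ccontr)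
        assume "\<not> ?thesis"
        then have ge: "rank M (gnd M - D) \<le> rank M (gnd M - D - {y})" by simp
        have yED: "y \<in> gnd M - D" using yE \<open>y \<noteq> x\<close> by blast
        have i1: "insert y (gnd M - D - {y}) = gnd M - D" using yED by blast
        have "rank M (insert y (gnd M - D - {y})) = rank M (gnd M - D - {y})"
          unfolding i1 using ge rank_mono[OF M, of "gnd M - D - {y}" "gnd M - D"] by auto
        then have "rank M (insert y (gnd M - (D - {x}) - {y})) = rank M (gnd M - (D - {x}) - {y})"
          by (rule rank_closure[OF M]) blast
        moreover have "insert y (gnd M - (D - {x}) - {y}) = gnd M - (D - {x})" using yE by blast
        ultimately show False using lt by simp
      qed
    qed
    ultimately show "y \<in> lcs M C D - {e}" using yE unfolding lcs_def by auto
  qed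
  thus ?thesis using xD cod2 by blast
qed

lemma main_ind: assumes M: "matroid M" and nl: "\<forall>e\<in>gnd M. rank M {e} = 1"
  and nc: "\<forall>e\<in>gnd M. rank M (gnd M - {e}) = rank M (gnd M)"
  shows "card (lcs M C D) = n \<Longrightarrow> C \<subseteq> gnd M \<Longrightarrow> D \<subseteq> gnd M \<Longrightarrow> C \<inter> D = {} \<Longrightarrow> indep M C \<Longrightarrow>
    rank M (gnd M - D) = rank M (gnd M) \<Longrightarrow>
    \<exists>X Y. X \<subseteq> C \<and> Y \<subseteq> D \<and> lcs M (C - X) (D - Y) = {} \<and> card X + card Y \<le> n"
proof (induction n arbitrary: C D rule: less_induct)
  case (less n C D)
  show ?case
  proof (cases "lcs M C D = {}")
    case True
    then show ?thesis by (intro exI[of _ "{}"]) simp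
  next
    case False
    then obtain e where eL: "e \<in> lcs M C D" by blast
    have fL: "finite (lcs M C D)" by (rule lcs_fin[OF M])
    have lt: "card L < n" if "L \<subseteq> lcs M C D - {e}" for L
    proof -
      have "card L \<le> card (lcs M C D - {e})" using that fL by (intro card_mono) auto
      moreover have "card (lcs M C D - {e}) < card (lcs M C D)" using fL eL by (rule card_Diff1_less)
      ultimately show ?thesis using less.prems(1) by linarith
    qed
    have fC: "finite C" using m_ifin[OF M less.prems(5)] .
    have fD: "finite D" using less.prems(3) m_fin[OF M] by (rule finite_subset)
    show ?thesis
    proof (cases "rank M (insert e C) = rank M C")
      case True
      from stepA[OF M nl less.prems(2,4,5) eL True]
      obtain x where xC: "x \<in> C" and sub: "lcs M (C - {x}) D \<subseteq> lcs M C D - {e}" by blast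
      have m: "card (lcs M (C - {x}) D) < n" by (rule lt[OF sub])
      have p2: "C - {x} \<subseteq> gnd M" using less.prems(2) by blast
      have p4: "(C - {x}) \<inter> D = {}" using less.prems(4) by blast
      have p5: "indep M (C - {x})" by (rule m_down[OF M less.prems(5)]) blast
      from less.IH[OF m refl p2 less.prems(3) p4 p5 less.prems(6)]
      obtain X Y where XY: "X \<subseteq> C - {x}" "Y \<subseteq> D" "lcs M (C - {x} - X) (D - Y) = {}"
        "card X + card Y \<le> card (lcs M (C - {x}) D)" by blast
      have fX: "finite X" using XY(1) fC finite_subset by (metis finite_Diff)
      have "x \<notin> X" using XY(1) by blast
      then have "card (insert x X) = card X + 1" using fX by simp
      moreover have "C - insert x X = C - {x} - X" by blast
      moreover have "insert x X \<subseteq> C" using XY(1) xC by blast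
      ultimately show ?thesis using XY m by (intro exI[of _ "insert x X"] exI[of _ Y]) simp
    next
      case False
      from stepB[OF M nc less.prems(2,3,4,6) eL False]
      obtain x where xD: "x \<in> D" and sub: "lcs M C (D - {x}) \<subseteq> lcs M C D - {e}"
        and cod: "rank M (gnd M - (D - {x})) = rank M (gnd M)" by blast
      have m: "card (lcs M C (D - {x})) < n" by (rule lt[OF sub])
      have p3: "D - {x} \<subseteq> gnd M" using less.prems(3) by blast
      have p4: "C \<inter> (D - {x}) = {}" using less.prems(4) by blast
      from less.IH[OF m refl less.prems(2) p3 p4 less.prems(5) cod]
      obtain X Y where XY: "X \<subseteq> C" "Y \<subseteq> D - {x}" "lcs M (C - X) (D - {x} - Y) = {}"
        "card X + card Y \<le> card (lcs M C (D - {x}))" by blast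
      have fY: "finite Y" using XY(2) fD finite_subset by (metis finite_Diff)
      have "x \<notin> Y" using XY(2) by blast
      then have "card (insert x Y) = card Y + 1" using fY by simp
      moreover have "D - insert x Y = D - {x} - Y" by blast
      moreover have "insert x Y \<subseteq> D" using XY(2) xD by blast
      ultimately show ?thesis using XY m by (intro exI[of _ X] exI[of _ "insert x Y"]) simp
    qed
  qed
qed

lemma conn_noloop: assumes M: "matroid M" and c: "connected_matroid M" and g: "card (gnd M) \<ge> 2"
  and e: "e \<in> gnd M"
  shows "rank M {e} = 1 \<and> rank M (gnd M - {e}) = rank M (gnd M)"
proof -
  have fE: "finite (gnd M)" by (rule m_fin[OF M])
  have "card (gnd M - {e}) \<ge> 1" using g e fE by simp
  then have "gnd M - {e} \<noteq> {}" by (metis card.empty not_one_le_zero)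
  then obtain f where f: "f \<in> gnd M" "f \<noteq> e" by blast
  obtain K where K: "circuit M K" "e \<in> K" "f \<in> K" using c e f unfolding connected_matroid_def by blast
  have KE: "K \<subseteq> gnd M" and nK: "\<not> indep M K" and sK: "\<forall>D. D \<subset> K \<longrightarrow> indep M D"
    using K(1) unfolding circuit_def by auto
  have fK: "finite K" using KE fE by (rule finite_subset)
  have "{e} \<subset> K" using K f by blast
  then have "indep M {e}" using sK by blast
  then have r1: "rank M {e} = 1" using rank_indep[OF M] by simp
  have "K - {e} \<subset> K" using K by blast
  then have iKe: "indep M (K - {e})" using sK by blast
  have rKe: "rank M (K - {e}) = card K - 1" using rank_indep[OF M iKe] K(2) fK by simp
  have "rank M K \<noteq> card K" using rank_card_indep[OF M fK] nK by blast
  moreover have "rank M K \<le> card K" by (rule rank_le_card[OF M fK])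
  moreover have "rank M (K - {e}) \<le> rank M K" by (rule rank_mono[OF M]) auto
  ultimately have "rank M K = rank M (K - {e})" using rKe by linarith
  moreover have "insert e (K - {e}) = K" using K(2) by blast
  ultimately have "rank M (insert e (K - {e})) = rank M (K - {e})" by simp
  moreover have "K - {e} \<subseteq> gnd M - {e}" using KE by blast
  ultimately have "rank M (insert e (gnd M - {e})) = rank M (gnd M - {e})" by (rule rank_closure[OF M])
  moreover have "insert e (gnd M - {e}) = gnd M" using e by blast
  ultimately show ?thesis using r1 by simp
qed

theorem lemma2p11:
  fixes M N :: "'a matroid" and l :: nat
  assumes "matroid M"
    and "connected_matroid M"
    and "card (gnd M) \<ge> 2"
    and "minor N M"
    and "l = card {e. loop N e \<or> coloop N e}"
  shows "\<exists>N'. minor N' M \<and> minor N N' \<and>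
               (\<forall>e. \<not> loop N' e \<and> \<not> coloop N' e) \<and>
               card (gnd N') \<le> card (gnd N) + l"
proof -
  have M: "matroid M" by (rule assms(1))
  have nl: "\<forall>e\<in>gnd M. rank M {e} = 1" using conn_noloop[OF M assms(2,3)] by blast
  have nc: "\<forall>e\<in>gnd M. rank M (gnd M - {e}) = rank M (gnd M)" using conn_noloop[OF M assms(2,3)] by blast
  obtain C D where CD: "C \<subseteq> gnd M" "D \<subseteq> gnd M" "C \<inter> D = {}" "indep M C"
    "rank M (gnd M - D) = rank M (gnd M)" and N: "N = delete (contract M C) D"
    using normalize[OF M assms(4)] by blast
  have l: "l = card (lcs M C D)" using assms(5) lcs_eq[OF M CD(1,3)] N by simp
  from main_ind[OF M nl nc l[symmetric] CD]
  obtain X Y where XY: "X \<subseteq> C" "Y \<subseteq> D" "lcs M (C - X) (D - Y) = {}" "card X + card Y \<le> l" by blast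
  define N' where "N' = delete (contract M (C - X)) (D - Y)"
  have c1: "C - X \<subseteq> gnd M" "D - Y \<subseteq> gnd M" "(C - X) \<inter> (D - Y) = {}" using CD by blast+
  have "minor N' M" unfolding minor_def N'_def using c1 by (intro exI[of _ "C - X"] exI[of _ "D - Y"]) simp
  moreover have "minor N N'"
  proof -
    have gN': "gnd N' = gnd M - (C - X) - (D - Y)" unfolding N'_def by simp
    have x1: "X \<subseteq> gnd M - (C - X) - (D - Y)" "Y \<subseteq> gnd M - (C - X) - (D - Y)" "X \<inter> Y = {}"
      using XY(1,2) CD(1,2,3) by blast+
    have "delete (contract N' X) Y = delete (contract M ((C - X) \<union> X)) ((D - Y) \<union> Y)"
      unfolding N'_def by (rule compose_minor[OF M c1 x1])
    moreover have "(C - X) \<union> X = C" "(D - Y) \<union> Y = D" using XY(1,2) by blast+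
    ultimately have "N = delete (contract N' X) Y" using N by simp
    thus ?thesis unfolding minor_def using x1 gN' by (intro exI[of _ X] exI[of _ Y]) simp
  qed
  moreover have "\<forall>e. \<not> loop N' e \<and> \<not> coloop N' e"
    using lcs_eq[OF M c1(1,3)] XY(3) unfolding N'_def by blast
  moreover have "card (gnd N') \<le> card (gnd N) + l"
  proof -
    have fE: "finite (gnd M)" by (rule m_fin[OF M])
    have "gnd N' \<subseteq> gnd N \<union> (X \<union> Y)" unfolding N'_def N by auto
    moreover have "finite (gnd N \<union> (X \<union> Y))"
    proof -
      have "gnd N \<union> (X \<union> Y) \<subseteq> gnd M" using XY(1,2) CD(1,2) unfolding N by auto
      thus ?thesis using fE by (rule finite_subset)
    qed
    ultimately have "card (gnd N') \<le> card (gnd N \<union> (X \<union> Y))" by (intro card_mono)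
    also have "\<dots> \<le> card (gnd N) + card (X \<union> Y)" by (rule card_Un_le)
    also have "\<dots> \<le> card (gnd N) + (card X + card Y)" using card_Un_le[of X Y] by simp
    finally show ?thesis using XY(4) by simp
  qed
  ultimately show ?thesis by (intro exI[of _ N']) simp
qed

end
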